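(* Consider a rule of the PJR-Exact family run on $(\mathcal{A},k)$, and fix $j$ with $1\le j\le k$ such that iterations $1,\dots,j$ are all normal. Then for every voter $i\in N$, either $|A_i\cap W_j|\ge \ell_j(i)$ or $f_i^j\ge \frac{\ell_j(i)-|A_i\cap W_j|}{\ell_j(i)}$.
   Context: Setting: voters $N=\{1,\dots,n\}$, candidates $C=\{c_1,\dots,c_m\}$, approval ballots $A_i\subseteq C$, $\mathcal{A}=(A_1,\dots,A_n)$, $k$ a positive integer with $k\le|C|$, $q=n/k$, $N_c=\{i: c\in A_i\}$. Convention: $\max\emptyset=0$. Dissatisfaction level: for $W\subseteq C$ with $|W|\le k$ and $c\in C\setminus W$, $\ell(c,W)$ is the largest nonnegative integer $\ell$ with $\ell=\lfloor \frac{k}{n}|\{i\in N: c\in A_i,\ |A_i\cap W|<\ell\}|\rfloor$. PJR-Exact family: iterative procedures selecting $w_1,\dots,w_k$, $W_0=\emptyset$, $W_j=W_{j-1}\cup\{w_j\}$, $w_j\notin W_{j-1}$, with vote fractions $f_i^0=1$, $0\le f_i^j\le f_i^{j-1}$, such that at each iteration $j$: (a) $f_i^j=f_i^{j-1}$ for $i\notin N_{w_j}$; (b) with $s=\sum_{i\in N_{w_j}}f_i^{j-1}$, if $s>q$ then $\sum_{i\in N_{w_j}}(f_i^{j-1}-f_i^j)=q$, and if $s\le q$ then $f_i^j=0$ for all $i\in N_{w_j}$; (c) if some $c\in C\setminus W_{j-1}$ has $\sum_{i\in N_c}f_i^{j-1}\ge q$ then $\sum_{i\in N_{w_j}}f_i^{j-1}\ge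 q$. Notation along a run: $\ell_j(c)=\ell(c,W_j)$ for $c\in C\setminus W_j$; $\ell_j(i)=\max_{c\in A_i\setminus W_j}\ell_j(c)$; for $c\in C\setminus W_j$ and $i\in N_c$, $\ell_j(i,c)=\max_{c'\in A_i\setminus(W_j\cup\{c\})}\ell_j(c')$; $g_i^j(c)=0$ if $\ell_j(i,c)\le|A_i\cap W_j|$ and $g_i^j(c)=\frac{\ell_j(i,c)-|A_i\cap W_j|-1}{\ell_j(i,c)}$ otherwise. Normal state: $c\in C\setminus W_j$ is in normal state after $j$ iterations if (1) for each $i\in N_c$ with $\ell_j(i,c)>|A_i\cap W_j|$ we have $f_i^j\ge\frac{\ell_j(i,c)-|A_i\cap W_j|}{\ell_j(i,c)}$, and (2) $\sum_{i\in N_c}(f_i^j-g_i^j(c))\ge q$. Normal iteration: iteration $j$ ($1\le j\le k$) is normal if $w_j$ is in normal state after $j-1$ iterations and, for each $i\in N_{w_j}$ with $\ell_{j-1}(i,w_j)>|A_i\cap W_{j-1}|$, $f_i^j\ge\frac{\ell_{j-1}(i,w_j)-|A_i\cap W_j|}{\ell_{j-1}(i,w_j)}$. *)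

theory Defs
  imports Main Complex_Main
begin

definition quota :: "'v set \<Rightarrow> nat \<Rightarrow> real" where
  "quota N k = real (card N) / real k"

definition supp :: "'v set \<Rightarrow> ('v \<Rightarrow> 'c set) \<Rightarrow> 'c \<Rightarrow> 'v set" where
  "supp N A c = {i \<in> N. c \<in> A i}"

definition dlevel :: "'v set \<Rightarrow> ('v \<Rightarrow> 'c set) \<Rightarrow> nat \<Rightarrow> 'c set \<Rightarrow> 'c \<Rightarrow> nat" where
  "dlevel N A k W c =
     (GREATEST l::nat. int l =
        \<lfloor>real k / real (card N) * real (card {i \<in> N. c \<in> A i \<and> card (A i \<inter> W) < l})\<rfloor>)"

definition Wset :: "(nat \<Rightarrow> 'c) \<Rightarrow> nat \<Rightarrow> 'c set" where
  "Wset w j = w ` {1..j}"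

definition lvoter :: "'v set \<Rightarrow> ('v \<Rightarrow> 'c set) \<Rightarrow> nat \<Rightarrow> 'c set \<Rightarrow> 'v \<Rightarrow> nat" where
  "lvoter N A k W i = Max (insert 0 (dlevel N A k W ` (A i - W)))"

definition lvoter_ex :: "'v set \<Rightarrow> ('v \<Rightarrow> 'c set) \<Rightarrow> nat \<Rightarrow> 'c set \<Rightarrow> 'v \<Rightarrow> 'c \<Rightarrow> nat" where
  "lvoter_ex N A k W i c = Max (insert 0 (dlevel N A k W ` (A i - (W \<union> {c}))))"

definition gval :: "'v set \<Rightarrow> ('v \<Rightarrow> 'c set) \<Rightarrow> nat \<Rightarrow> 'c set \<Rightarrow> 'v \<Rightarrow> 'c \<Rightarrow> real" where
  "gval N A k W i c =
     (let L = lvoter_ex N A k W i c in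
      if L \<le> card (A i \<inter> W) then 0
      else (real L - real (card (A i \<inter> W)) - 1) / real L)"

(* PJR-Exact run: selected candidates w 1, ..., w k and vote fractions f j i *)
definition pjr_exact_run ::
  "'v set \<Rightarrow> 'c set \<Rightarrow> ('v \<Rightarrow> 'c set) \<Rightarrow> nat \<Rightarrow> (nat \<Rightarrow> 'c) \<Rightarrow> (nat \<Rightarrow> 'v \<Rightarrow> real) \<Rightarrow> bool" where
  "pjr_exact_run N C A k w f \<longleftrightarrow>
     (\<forall>i\<in>N. f 0 i = 1) \<and>
     (\<forall>j\<in>{1..k}.
        w j \<in> C \<and> w j \<notin> Wset w (j - 1) \<and>
        (\<forall>i\<in>N. 0 \<le> f j i \<and> f j i \<le> f (j - 1) i) \<and>
        (\<forall>i\<in>N - supp N A (w j). f j i = f (j - 1) i) \<and>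
        (let s = (\<Sum>i\<in>supp N A (w j). f (j - 1) i) in
           (s > quota N k \<longrightarrow> (\<Sum>i\<in>supp N A (w j). f (j - 1) i - f j i) = quota N k) \<and>
           (s \<le> quota N k \<longrightarrow> (\<forall>i\<in>supp N A (w j). f j i = 0))) \<and>
        ((\<exists>c\<in>C - Wset w (j - 1). (\<Sum>i\<in>supp N A c. f (j - 1) i) \<ge> quota N k) \<longrightarrow>
           (\<Sum>i\<in>supp N A (w j). f (j - 1) i) \<ge> quota N k))"

definition normal_state ::
  "'v set \<Rightarrow> 'c set \<Rightarrow> ('v \<Rightarrow> 'c set) \<Rightarrow> nat \<Rightarrow> 'c set \<Rightarrow> ('v \<Rightarrow> real) \<Rightarrow> 'c \<Rightarrow> bool" where
  "normal_state N C A k W phi c \<longleftrightarrow>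
     c \<in> C - W \<and>
     (\<forall>i\<in>supp N A c. lvoter_ex N A k W i c > card (A i \<inter> W) \<longrightarrow>
        phi i \<ge> (real (lvoter_ex N A k W i c) - real (card (A i \<inter> W))) / real (lvoter_ex N A k W i c)) \<and>
     (\<Sum>i\<in>supp N A c. phi i - gval N A k W i c) \<ge> quota N k"

definition normal_iteration ::
  "'v set \<Rightarrow> 'c set \<Rightarrow> ('v \<Rightarrow> 'c set) \<Rightarrow> nat \<Rightarrow> (nat \<Rightarrow> 'c) \<Rightarrow> (nat \<Rightarrow> 'v \<Rightarrow> real) \<Rightarrow> nat \<Rightarrow> bool" where
  "normal_iteration N C A k w f j \<longleftrightarrow>
     normal_state N C A k (Wset w (j - 1)) (f (j - 1)) (w j) \<and>
     (\<forall>i\<in>supp N A (w j).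
        lvoter_ex N A k (Wset w (j - 1)) i (w j) > card (A i \<inter> Wset w (j - 1)) \<longrightarrow>
        f j i \<ge> (real (lvoter_ex N A k (Wset w (j - 1)) i (w j)) - real (card (A i \<inter> Wset w j)))
                 / real (lvoter_ex N A k (Wset w (j - 1)) i (w j)))"

end

theory Submission
  imports Defs
begin

lemma gfp_le:
  fixes g h :: "nat \<Rightarrow> int" and b :: nat
  assumes hm: "\<And>l l'. l \<le> l' \<Longrightarrow> h l \<le> h l'"
    and gh: "\<And>l. g l \<le> h l" and hb: "\<And>l. h l \<le> int b" and hn: "\<And>l. 0 \<le> h l"
    and g0: "g 0 = 0"
  shows "(GREATEST l. int l = g l) \<le> (GREATEST l. int l = h l)"
proof -
  have gb: "\<And>l. g l \<le> int b" using gh hb order_trans by blast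
  define l' where "l' = (GREATEST l. int l = g l)"
  have P0: "int 0 = g 0" using g0 by simp
  have bnd: "\<forall>y. int y = g y \<longrightarrow> y \<le> b" using gb by (metis of_nat_le_iff)
  have l': "int l' = g l'" unfolding l'_def by (rule GreatestI_nat[where P="\<lambda>l. int l = g l", OF P0]) (use bnd in blast)
  define m where "m = (GREATEST l. int l \<le> h l)"
  have bnd2: "\<forall>y. int y \<le> h y \<longrightarrow> y \<le> b" using hb by (metis of_nat_le_iff order_trans)
  have l'h: "int l' \<le> h l'" using l' gh by simp
  have lm: "l' \<le> m" unfolding m_def by (rule Greatest_le_nat[where P="\<lambda>l. int l \<le> h l", OF l'h]) (use bnd2 in blast)
  have m: "int m \<le> h m" unfolding m_def by (rule GreatestI_nat[where P="\<lambda>l. int l \<le> h l", OF l'h]) (use bnd2 in blast)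
  define t where "t = nat (h m)"
  have t: "int t = h m" using hn t_def by simp
  have "m \<le> t" using m t by simp
  hence "h m \<le> h t" using hm by blast
  hence "int t \<le> h t" using t by simp
  hence "t \<le> m" unfolding m_def by (rule Greatest_le_nat[where P="\<lambda>l. int l \<le> h l"]) (use bnd2 in blast)
  hence mfix: "int m = h m" using \<open>m \<le> t\<close> t by simp
  have bnd3: "\<forall>y. int y = h y \<longrightarrow> y \<le> b" using hb by (metis of_nat_le_iff)
  have "m \<le> (GREATEST l. int l = h l)" by (rule Greatest_le_nat[where P="\<lambda>l. int l = h l", OF mfix]) (use bnd3 in blast)
  thus ?thesis using lm l'_def by simp
qed

lemma dlevel_mono:
  assumes fN: "finite N" and sub: "W \<subseteq> W'" and fW: "finite W'"
  shows "dlevel N A k W' c \<le> dlevel N A k W c"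
proof -
  define H where "H W l = \<lfloor>real k / real (card N) * real (card {i \<in> N. c \<in> A i \<and> card (A i \<inter> W) < l})\<rfloor>" for W l
  have cardle: "card {i \<in> N. c \<in> A i \<and> card (A i \<inter> W) < l} \<le> card N" for W l
    using fN by (intro card_mono) auto
  have Hn: "0 \<le> H W l" for W l unfolding H_def by simp
  have Hb: "H W l \<le> int k" for W l
  proof (cases "card N = 0")
    case True thus ?thesis unfolding H_def by simp
  next
    case False
    have "real k / real (card N) * real (card {i \<in> N. c \<in> A i \<and> card (A i \<inter> W) < l})
          \<le> real k / real (card N) * real (card N)"
      using cardle[of W l] by (intro mult_left_mono) auto
    also have "\<dots> = real k" using False by simp
    finally show ?thesis unfolding H_def by (metis floor_mono floor_of_nat)
  qed
  have Hm: "H W l \<le> H W l'" if "l \<le> l'" for W l l'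
  proof -
    have "card {i \<in> N. c \<in> A i \<and> card (A i \<inter> W) < l} \<le> card {i \<in> N. c \<in> A i \<and> card (A i \<inter> W) < l'}"
      using fN that by (intro card_mono) auto
    thus ?thesis unfolding H_def by (intro floor_mono mult_left_mono) auto
  qed
  have HW: "H W' l \<le> H W l" for l
  proof -
    have "card (A i \<inter> W) \<le> card (A i \<inter> W')" for i
      using sub fW by (intro card_mono) auto
    hence "{i \<in> N. c \<in> A i \<and> card (A i \<inter> W') < l} \<subseteq> {i \<in> N. c \<in> A i \<and> card (A i \<inter> W) < l}"
      by (auto intro: le_less_trans)
    hence "card {i \<in> N. c \<in> A i \<and> card (A i \<inter> W') < l} \<le> card {i \<in> N. c \<in> A i \<and> card (A i \<inter> W) < l}"
      using fN by (intro card_mono) auto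
    thus ?thesis unfolding H_def by (intro floor_mono mult_left_mono) auto
  qed
  have H0: "H W' 0 = 0" unfolding H_def by simp
  have "(GREATEST l. int l = H W' l) \<le> (GREATEST l. int l = H W l)"
    by (rule gfp_le[where b=k]) (use Hm HW Hb Hn H0 in auto)
  thus ?thesis unfolding dlevel_def H_def by simp
qed

lemma frac_mono:
  fixes a l L :: real
  assumes "0 \<le> a" "0 < l" "l \<le> L"
  shows "(l - a) / l \<le> (L - a) / L"
proof -
  have "a / L \<le> a / l" using assms by (intro divide_left_mono) auto
  moreover have "(l - a) / l = 1 - a / l" "(L - a) / L = 1 - a / L" using assms by (auto simp: field_simps)
  ultimately show ?thesis by simp
qed

lemma Wset_Suc: "Wset w (Suc j) = insert (w (Suc j)) (Wset w j)"
  unfolding Wset_def by (simp add: atLeastAtMostSuc_conv)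

lemma Wset_fin: "finite (Wset w j)" unfolding Wset_def by simp

theorem mainTheorem3:
  fixes N :: "'v set" and C :: "'c set" and A :: "'v \<Rightarrow> 'c set"
    and k j :: nat and w :: "nat \<Rightarrow> 'c" and f :: "nat \<Rightarrow> 'v \<Rightarrow> real"
  assumes "finite N" and "finite C" and "\<forall>i\<in>N. A i \<subseteq> C"
    and "0 < k" and "k \<le> card C"
    and "pjr_exact_run N C A k w f"
    and "1 \<le> j" and "j \<le> k"
    and "\<forall>j'\<in>{1..j}. normal_iteration N C A k w f j'"
  shows "\<forall>i\<in>N. card (A i \<inter> Wset w j) \<ge> lvoter N A k (Wset w j) i \<or>
           f j i \<ge> (real (lvoter N A k (Wset w j) i) - real (card (A i \<inter> Wset w j)))
                    / real (lvoter N A k (Wset w j) i)"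
proof -
  have finA: "\<And>i. i \<in> N \<Longrightarrow> finite (A i)" using assms(2,3) finite_subset by blast
  have lv_ge: "dlevel N A k W c \<le> lvoter N A k W i" if "i \<in> N" "c \<in> A i - W" for W i c
    unfolding lvoter_def using finA[OF that(1)] that(2) by (intro Max_ge) auto
  have lvx_ge: "dlevel N A k W c' \<le> lvoter_ex N A k W i c" if "i \<in> N" "c' \<in> A i - (W \<union> {c})" for W i c c'
    unfolding lvoter_ex_def using finA[OF that(1)] that(2) by (intro Max_ge) auto
  have lv_in: "\<exists>c \<in> A i - W. dlevel N A k W c = lvoter N A k W i" if "i \<in> N" "0 < lvoter N A k W i" for W i
  proof -
    have "lvoter N A k W i \<in> insert 0 (dlevel N A k W ` (A i - W))"
      unfolding lvoter_def using finA[OF that(1)] by (intro Max_in) auto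
    thus ?thesis using that(2) by auto
  qed
  have run: "\<forall>i\<in>N. f 0 i = 1" 
    "\<And>j. j \<in> {1..k} \<Longrightarrow> w j \<notin> Wset w (j - 1) \<and> (\<forall>i\<in>N - supp N A (w j). f j i = f (j - 1) i)"
    using assms(6) unfolding pjr_exact_run_def by auto
  have "j \<le> k \<longrightarrow> (\<forall>j'\<in>{1..j}. normal_iteration N C A k w f j') \<longrightarrow>
    (\<forall>i\<in>N. card (A i \<inter> Wset w j) \<ge> lvoter N A k (Wset w j) i \<or>
           f j i \<ge> (real (lvoter N A k (Wset w j) i) - real (card (A i \<inter> Wset w j)))
                    / real (lvoter N A k (Wset w j) i))"
  proof (induction j)
    case 0
    show ?case
    proof (intro impI ballI)
      fix i assume i: "i \<in> N"
      show "card (A i \<inter> Wset w 0) \<ge> lvoter N A k (Wset w 0) i \<or>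
           f 0 i \<ge> (real (lvoter N A k (Wset w 0) i) - real (card (A i \<inter> Wset w 0)))
                    / real (lvoter N A k (Wset w 0) i)"
        using run(1) i by (cases "lvoter N A k (Wset w 0) i = 0") (auto simp: Wset_def)
    qed
  next
    case (Suc j)
    show ?case
    proof (intro impI ballI)
      assume jk: "Suc j \<le> k" and nrm: "\<forall>j'\<in>{1..Suc j}. normal_iteration N C A k w f j'"
      fix i assume i: "i \<in> N"
      define W where "W = Wset w j"
      define W' where "W' = Wset w (Suc j)"
      have W'eq: "W' = insert (w (Suc j)) W" unfolding W_def W'_def by (rule Wset_Suc)
      define l where "l = lvoter N A k W' i"
      define a where "a = card (A i \<inter> W')"
      have IH: "\<forall>i\<in>N. card (A i \<inter> W) \<ge> lvoter N A k W i \<or>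
           f j i \<ge> (real (lvoter N A k W i) - real (card (A i \<inter> W))) / real (lvoter N A k W i)"
        using Suc.IH jk nrm unfolding W_def by auto
      show "card (A i \<inter> Wset w (Suc j)) \<ge> lvoter N A k (Wset w (Suc j)) i \<or>
           f (Suc j) i \<ge> (real (lvoter N A k (Wset w (Suc j)) i) - real (card (A i \<inter> Wset w (Suc j))))
                    / real (lvoter N A k (Wset w (Suc j)) i)"
      proof (cases "a \<ge> l")
        case True thus ?thesis unfolding a_def l_def W'_def by simp
      next
        case False
        hence lpos: "0 < l" by simp
        obtain c where c: "c \<in> A i - W'" "dlevel N A k W' c = l"
          using lv_in[OF i] lpos unfolding l_def by blast
        have finW': "finite W'" unfolding W'_def by (rule Wset_fin)
        have dl: "l \<le> dlevel N A k W c"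
          using dlevel_mono[OF assms(1) _ finW', of W A k c] c(2) W'eq by auto
        have aW: "card (A i \<inter> W) \<le> a" unfolding a_def using finW' W'eq by (intro card_mono) auto
        have sj: "Suc j \<in> {1..k}" using jk by simp
        show ?thesis
        proof (cases "i \<in> supp N A (w (Suc j))")
          case True
          define L where "L = lvoter_ex N A k W i (w (Suc j))"
          have "c \<in> A i - (W \<union> {w (Suc j)})" using c(1) W'eq by auto
          hence lL: "l \<le> L" using lvx_ge[OF i] dl unfolding L_def by (meson order_trans)
          have "L > card (A i \<inter> W)" using lL aW False by simp
          moreover have "normal_iteration N C A k w f (Suc j)" using nrm by auto
          ultimately have "f (Suc j) i \<ge> (real L - real a) / real L"
            unfolding normal_iteration_def L_def a_def W_def W'_def using True by auto
          moreover have "(real l - real a) / real l \<le> (real L - real a) / real L"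
            using lL lpos by (intro frac_mono) auto
          ultimately show ?thesis unfolding l_def a_def W'_def by simp
        next
          case False2: False
          have fe: "f (Suc j) i = f j i" using run(2)[OF sj] i False2 by simp
          have "w (Suc j) \<notin> A i" using False2 i unfolding supp_def by auto
          hence aeq: "card (A i \<inter> W) = a" unfolding a_def W'eq by simp
          have cW: "c \<in> A i - W" using c(1) W'eq by auto
          have lL: "l \<le> lvoter N A k W i" using lv_ge[OF i cW] dl by simp
          hence "\<not> card (A i \<inter> W) \<ge> lvoter N A k W i" using aeq False by simp
          hence "f j i \<ge> (real (lvoter N A k W i) - real a) / real (lvoter N A k W i)"
            using IH i aeq by auto
          moreover have "(real l - real a) / real l \<le> (real (lvoter N A k W i) - real a) / real (lvoter N A k W i)"
            using lL lpos by (intro frac_mono) auto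
          ultimately show ?thesis using fe unfolding l_def a_def W'_def by simp
        qed
      qed
    qed
  qed
  thus ?thesis using assms(8,9) by blast
qed

end
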